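(* Let $G=(V(G),E(G))$ be a graph, let $x\in V(G)$, and let $w = UxZx$ be a word-representant of $G$, where $U$ and $Z$ are words, $Z$ contains no occurrence of $x$, and $Z$ contains every letter of $V(G)\setminus\{x\}$. Then the word $w' = UxZ$ also represents $G$.
   Context: All graphs are simple and undirected. For a word $w$ and distinct letters $x,y$, we say $x$ and $y$ alternate in $w$ if deleting all letters other than $x$ and $y$ from $w$ yields either $xyxy\ldots$ or $yxyx\ldots$ (of odd or even length); in particular, if each of $x,y$ occurs once, they alternate. A word $w$ over the alphabet $V(G)$ represents $G$ (is a word-representant of $G$) if every letter of $V(G)$ occurs in $w$ and, for all distinct $x,y\in V(G)$, $xy\in E(G)$ if and only if $x$ and $y$ alternate in $w$. *)

theory Defs
  imports Main
begin

definition simple_graph :: "'a set \<Rightarrow> ('a \<Rightarrow> 'a \<Rightarrow> bool) \<Rightarrow> bool" where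
  "simple_graph V E \<longleftrightarrow> finite V \<and>
     (\<forall>x y. E x y \<longrightarrow> x \<in> V \<and> y \<in> V \<and> x \<noteq> y \<and> E y x)"

text \<open>x and y alternate in w: deleting all other letters yields xyxy... or yxyx...,
i.e. consecutive letters of the restricted word differ.\<close>
definition alternate :: "'a list \<Rightarrow> 'a \<Rightarrow> 'a \<Rightarrow> bool" where
  "alternate w x y \<longleftrightarrow>
     (let u = filter (\<lambda>c. c = x \<or> c = y) w in
      \<forall>i. Suc i < length u \<longrightarrow> u ! i \<noteq> u ! Suc i)"

definition represents :: "'a set \<Rightarrow> ('a \<Rightarrow> 'a \<Rightarrow> bool) \<Rightarrow> 'a list \<Rightarrow> bool" where
  "represents V E w \<longleftrightarrow> set w = V \<and>
     (\<forall>x\<in>V. \<forall>y\<in>V. x \<noteq> y \<longrightarrow> (E x y \<longleftrightarrow> alternate w x y))"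

end

theory Submission
  imports Defs
begin

lemma alt_succ: "alternate w x y \<longleftrightarrow> successively (\<noteq>) (filter (\<lambda>c. c = x \<or> c = y) w)"
  unfolding alternate_def Let_def successively_conv_nth by simp

lemma key:
  assumes "zf \<noteq> []" "set zf \<subseteq> {y}" "y \<noteq> x"
  shows "successively (\<noteq>) (u @ [x] @ zf @ [x]) \<longleftrightarrow> successively (\<noteq>) (u @ [x] @ zf)"
proof -
  have "last zf = y" using assms(1,2) last_in_set by blast
  hence "last (u @ [x] @ zf) \<noteq> x" using assms by simp
  then show ?thesis
    using successively_append_iff[of "(\<noteq>)" "u @ [x] @ zf" "[x]"] by simp
qed

theorem mainTheorem2:
  fixes V :: "'a set" and E :: "'a \<Rightarrow> 'a \<Rightarrow> bool" and x :: 'a and U Z :: "'a list"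
  assumes "simple_graph V E"
    and "x \<in> V"
    and "represents V E (U @ [x] @ Z @ [x])"
    and "x \<notin> set Z"
    and "V - {x} \<subseteq> set Z"
  shows "represents V E (U @ [x] @ Z)"
proof -
  have alt: "alternate (U @ [x] @ Z @ [x]) a b \<longleftrightarrow> alternate (U @ [x] @ Z) a b"
    if "a \<in> V" "b \<in> V" "a \<noteq> b" for a b
  proof (cases "a = x \<or> b = x")
    case False
    then show ?thesis unfolding alt_succ by auto
  next
    case True
    then obtain y where y: "y \<in> V" "y \<noteq> x" "{a,b} = {x,y}" 
    proof (cases "a = x")
      case True thus ?thesis using that \<open>a \<noteq> b\<close> \<open>b \<in> V\<close> by blast
    next
      case False thus ?thesis using that \<open>a = x \<or> b = x\<close> \<open>a \<in> V\<close> by (metis insert_commute)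
    qed
    have P: "(\<lambda>c. c = a \<or> c = b) = (\<lambda>c. c = x \<or> c = y)" using y(3) by (auto simp: doubleton_eq_iff)
    have ff: "filter (\<lambda>c. c = x \<or> c = y) Z \<noteq> []" using y assms(5) by (auto simp: filter_empty_conv)
    have fs: "set (filter (\<lambda>c. c = x \<or> c = y) Z) \<subseteq> {y}" using assms(4) by auto
    show ?thesis unfolding alt_succ P
      using key[OF ff fs y(2), of "filter (\<lambda>c. c = x \<or> c = y) U"] by simp
  qed
  show ?thesis using assms(3) alt assms(2) unfolding represents_def by auto
qed

end
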